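(* Let $X$ be a $T_1$-space with $|X|\ge 3$ whose number of isolated points is finite and positive. Then $X$ is reconstructible.
   Context: For a topological space $X$ and $x \in X$, the set $X\setminus\{x\}$ carries the subspace topology. A card of $X$ is a space homeomorphic to $X \setminus \{x\}$ for some $x \in X$. The deck of $X$ is $\mathcal{D}(X)=\{[X\setminus\{x\}]_\sim : x \in X\}$, where $[Y]_\sim$ denotes the homeomorphism class of $Y$. A space $Z$ is a reconstruction of $X$ if $\mathcal{D}(Z)=\mathcal{D}(X)$. A space $X$ is reconstructible if every reconstruction of $X$ is homeomorphic to $X$. *)

theory Defs
  imports "HOL-Analysis.Analysis"
begin

definition card_of_space :: "'a topology \<Rightarrow> 'a \<Rightarrow> 'a topology" where
  "card_of_space X x = subtopology X (topspace X - {x})"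

text \<open>Z is a reconstruction of X: the decks (sets of homeomorphism classes of cards)
  coincide. Z may live on a different type than X.\<close>
definition is_reconstruction :: "'b topology \<Rightarrow> 'a topology \<Rightarrow> bool" where
  "is_reconstruction Z X \<longleftrightarrow>
     (\<forall>z\<in>topspace Z. \<exists>x\<in>topspace X. card_of_space Z z homeomorphic_space card_of_space X x) \<and>
     (\<forall>x\<in>topspace X. \<exists>z\<in>topspace Z. card_of_space X x homeomorphic_space card_of_space Z z)"

definition isolated_points_of :: "'a topology \<Rightarrow> 'a set" where
  "isolated_points_of X = {x \<in> topspace X. openin X {x}}"

end

theory Submission
  imports Defs
begin

lemma iso_card:
  assumes "t1_space X"
  shows "isolated_points_of (card_of_space X x) = isolated_points_of X - {x}"
proof -
  have op: "openin X (topspace X - {x})"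
  proof (cases "x \<in> topspace X")
    case True
    then have "closedin X {x}" using assms by (simp add: closedin_t1_singleton)
    then show ?thesis by blast
  next
    case False
    then show ?thesis by auto
  qed
  show ?thesis
    unfolding isolated_points_of_def card_of_space_def
    using openin_open_subtopology[OF op] by auto
qed

lemma iso_hom:
  assumes "homeomorphic_map X Y f"
  shows "bij_betw f (isolated_points_of X) (isolated_points_of Y)"
proof -
  have im: "f ` topspace X = topspace Y" and inj: "inj_on f (topspace X)"
    using assms by (auto simp: homeomorphic_eq_everything_map)
  have eq: "openin X {x} \<longleftrightarrow> openin Y {f x}" if "x \<in> topspace X" for x
    using homeomorphic_map_openness[OF assms, of "{x}"] that by auto
  have "f ` isolated_points_of X = isolated_points_of Y"
  proof
    show "f ` isolated_points_of X \<subseteq> isolated_points_of Y"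
      unfolding isolated_points_of_def using eq im by auto
    show "isolated_points_of Y \<subseteq> f ` isolated_points_of X"
    proof
      fix y assume "y \<in> isolated_points_of Y"
      then have y: "y \<in> topspace Y" "openin Y {y}" unfolding isolated_points_of_def by auto
      then obtain x where x: "x \<in> topspace X" "y = f x" using im by auto
      then have "x \<in> isolated_points_of X" using eq y unfolding isolated_points_of_def by auto
      then show "y \<in> f ` isolated_points_of X" using x by auto
    qed
  qed
  moreover have "inj_on f (isolated_points_of X)"
    using inj by (rule inj_on_subset) (auto simp: isolated_points_of_def)
  ultimately show ?thesis by (simp add: bij_betw_def)
qed

lemma iso_homsp:
  assumes "X homeomorphic_space Y"
  shows "finite (isolated_points_of X) \<longleftrightarrow> finite (isolated_points_of Y)"
    and "card (isolated_points_of X) = card (isolated_points_of Y)"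
  using assms iso_hom bij_betw_finite bij_betw_same_card
  unfolding homeomorphic_space by metis+

lemma ext_cont:
  assumes "t1_space X" "p \<in> topspace X" "openin X {p}" "z \<in> topspace Z"
    and f: "continuous_map (card_of_space X p) (card_of_space Z z) f"
  shows "continuous_map X Z (\<lambda>x. if x = p then z else f x)"
  unfolding continuous_map_def
proof (intro conjI allI impI)
  have fm: "f x \<in> topspace Z - {z}" if "x \<in> topspace X - {p}" for x
    using f that unfolding continuous_map_def card_of_space_def by auto
  show "(\<lambda>x. if x = p then z else f x) \<in> topspace X \<rightarrow> topspace Z"
    using fm assms(4) by auto
  fix U assume U: "openin Z U"
  have "closedin X {p}"
    using assms(1,2) by (rule closedin_t1_singleton)
  then have op: "openin X (topspace X - {p})"
    by (simp add: closedin_def)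
  have "openin (card_of_space Z z) (U \<inter> (topspace Z - {z}))"
    unfolding card_of_space_def using U by (simp add: openin_subtopology_Int)
  then have A: "openin (card_of_space X p) {x \<in> topspace (card_of_space X p). f x \<in> U \<inter> (topspace Z - {z})}"
    using f unfolding continuous_map_def by blast
  have B: "{x \<in> topspace (card_of_space X p). f x \<in> U \<inter> (topspace Z - {z})} = {x \<in> topspace X - {p}. f x \<in> U}"
    using fm unfolding card_of_space_def by auto
  from A have "openin (card_of_space X p) {x \<in> topspace X - {p}. f x \<in> U}"
    unfolding B .
  then have "openin (subtopology X (topspace X - {p})) {x \<in> topspace X - {p}. f x \<in> U}"
    unfolding card_of_space_def .
  then have o1: "openin X {x \<in> topspace X - {p}. f x \<in> U}"
    using openin_open_subtopology[OF op] by blast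
  show "openin X {x \<in> topspace X. (if x = p then z else f x) \<in> U}"
  proof (cases "z \<in> U")
    case True
    then have "{x \<in> topspace X. (if x = p then z else f x) \<in> U} = {p} \<union> {x \<in> topspace X - {p}. f x \<in> U}"
      using assms(2) by auto
    then show ?thesis using o1 assms(3) openin_Un by metis
  next
    case False
    then have "{x \<in> topspace X. (if x = p then z else f x) \<in> U} = {x \<in> topspace X - {p}. f x \<in> U}"
      by auto
    then show ?thesis using o1 by simp
  qed
qed

lemma top_card: "topspace (card_of_space X p) = topspace X - {p}"
  unfolding card_of_space_def by auto

lemma extend_homeo:
  assumes "t1_space X" "t1_space Z" "p \<in> topspace X" "openin X {p}"
    "z \<in> topspace Z" "openin Z {z}"
    and h: "card_of_space X p homeomorphic_space card_of_space Z z"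
  shows "X homeomorphic_space Z"
proof -
  obtain f g where fg: "homeomorphic_maps (card_of_space X p) (card_of_space Z z) f g"
    using h unfolding homeomorphic_space_def by blast
  have cf: "continuous_map (card_of_space X p) (card_of_space Z z) f"
    and cg: "continuous_map (card_of_space Z z) (card_of_space X p) g"
    and gf: "\<And>x. x \<in> topspace X - {p} \<Longrightarrow> g (f x) = x"
    and fg': "\<And>y. y \<in> topspace Z - {z} \<Longrightarrow> f (g y) = y"
    using fg unfolding homeomorphic_maps_def top_card by auto
  have fm: "\<And>x. x \<in> topspace X - {p} \<Longrightarrow> f x \<in> topspace Z - {z}"
    using cf unfolding continuous_map_def top_card by auto
  have gm: "\<And>y. y \<in> topspace Z - {z} \<Longrightarrow> g y \<in> topspace X - {p}"
    using cg unfolding continuous_map_def top_card by auto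
  have "homeomorphic_maps X Z (\<lambda>x. if x = p then z else f x) (\<lambda>y. if y = z then p else g y)"
    unfolding homeomorphic_maps_def
  proof (intro conjI ballI)
    show "continuous_map X Z (\<lambda>x. if x = p then z else f x)"
      using ext_cont[OF assms(1,3,4,5) cf] .
    show "continuous_map Z X (\<lambda>y. if y = z then p else g y)"
      using ext_cont[OF assms(2,5,6,3) cg] .
  next
    fix x assume x: "x \<in> topspace X"
    show "(if (if x = p then z else f x) = z then p else g (if x = p then z else f x)) = x"
    proof (cases "x = p")
      case False
      then have "f x \<in> topspace Z - {z}" using fm x by auto
      then show ?thesis using False gf x by auto
    qed auto
  next
    fix y assume y: "y \<in> topspace Z"
    show "(if (if y = z then p else g y) = p then z else f (if y = z then p else g y)) = y"
    proof (cases "y = z")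
      case False
      then have "g y \<in> topspace X - {p}" using gm y by auto
      then show ?thesis using False fg' y by auto
    qed auto
  qed
  then show ?thesis by (rule homeomorphic_maps_imp_homeomorphic_space)
qed

lemma hom_top:
  assumes "X homeomorphic_space Y"
  obtains h where "h ` topspace X = topspace Y" "inj_on h (topspace X)"
  using assms unfolding homeomorphic_space homeomorphic_eq_everything_map by blast

theorem theorem4p4:
  fixes X :: "'a topology" and Z :: "'b topology"
  assumes "t1_space X"
    and "\<exists>a b c. a \<in> topspace X \<and> b \<in> topspace X \<and> c \<in> topspace X \<and> a \<noteq> b \<and> a \<noteq> c \<and> b \<noteq> c"
    and "finite (isolated_points_of X)"
    and "isolated_points_of X \<noteq> {}"
    and "is_reconstruction Z X"
  shows "X homeomorphic_space Z"
proof -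
  have R1: "\<And>z. z \<in> topspace Z \<Longrightarrow> \<exists>x\<in>topspace X. card_of_space Z z homeomorphic_space card_of_space X x"
    and R2: "\<And>x. x \<in> topspace X \<Longrightarrow> \<exists>z\<in>topspace Z. card_of_space X x homeomorphic_space card_of_space Z z"
    using assms(5) unfolding is_reconstruction_def by auto
  obtain p where p: "p \<in> isolated_points_of X" using assms(4) by blast
  then have pX: "p \<in> topspace X" and po: "openin X {p}" unfolding isolated_points_of_def by auto
  obtain z where zZ: "z \<in> topspace Z" and hz: "card_of_space X p homeomorphic_space card_of_space Z z"
    using R2[OF pX] by blast
  obtain h where h1: "h ` (topspace X - {p}) = topspace Z - {z}" and h2: "inj_on h (topspace X - {p})"
    using hom_top[OF hz] unfolding top_card by metis
  obtain a b where ab: "a \<in> topspace X - {p}" "b \<in> topspace X - {p}" "a \<noteq> b"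
    using assms(2) by blast
  define u where "u = h a"
  define v where "v = h b"
  have uv: "u \<in> topspace Z" "v \<in> topspace Z" "u \<noteq> z" "v \<noteq> z" "u \<noteq> v"
    using h1 h2 ab unfolding u_def v_def inj_on_def by blast+
  have t1Z: "t1_space Z"
    unfolding t1_space_def
  proof (intro ballI impI)
    fix x y assume xy: "x \<in> topspace Z" "y \<in> topspace Z" "x \<noteq> y"
    obtain c where c: "c \<in> topspace Z" "c \<noteq> x" "c \<noteq> y"
      using uv zZ by metis
    obtain w where "w \<in> topspace X" and hw: "card_of_space Z c homeomorphic_space card_of_space X w"
      using R1[OF c(1)] by blast
    have "t1_space (card_of_space X w)"
      unfolding card_of_space_def using assms(1) by (rule t1_space_subtopology)
    then have "t1_space (card_of_space Z c)" using hw homeomorphic_t1_space by blast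
    moreover have "x \<in> topspace (card_of_space Z c)" "y \<in> topspace (card_of_space Z c)"
      using xy c unfolding top_card by auto
    ultimately obtain U where U: "openin (card_of_space Z c) U" "x \<in> U" "y \<notin> U"
      unfolding t1_space_def using xy(3) by blast
    then obtain T where "openin Z T" "U = T \<inter> (topspace Z - {c})"
      unfolding card_of_space_def openin_subtopology by blast
    then show "\<exists>U. openin Z U \<and> x \<in> U \<and> y \<notin> U" using U xy c by blast
  qed
  show ?thesis
  proof (cases "openin Z {z}")
    case True
    show ?thesis by (rule extend_homeo[OF assms(1) t1Z pX po zZ True hz])
  next
    case False
    have isoZ: "isolated_points_of (card_of_space Z z) = isolated_points_of Z"
      using iso_card[OF t1Z] False by (auto simp: isolated_points_of_def)
    have isoX: "isolated_points_of (card_of_space X p) = isolated_points_of X - {p}"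
      using iso_card[OF assms(1)] .
    have finZ: "finite (isolated_points_of Z)"
      using iso_homsp(1)[OF hz] isoZ isoX assms(3) by simp
    have cardZ: "card (isolated_points_of Z) = card (isolated_points_of X) - 1"
      using iso_homsp(2)[OF hz] isoZ isoX assms(3) p by simp
    have pos: "card (isolated_points_of X) > 0" using assms(3) p card_gt_0_iff by blast
    show ?thesis
    proof (cases "\<exists>x\<in>topspace X. \<not> openin X {x}")
      case True
      then obtain x where x: "x \<in> topspace X" "\<not> openin X {x}" by blast
      then have xi: "isolated_points_of (card_of_space X x) = isolated_points_of X"
        using iso_card[OF assms(1)] by (auto simp: isolated_points_of_def)
      obtain w where "w \<in> topspace Z" and hw: "card_of_space X x homeomorphic_space card_of_space Z w"
        using R2[OF x(1)] by blast
      have "card (isolated_points_of X) = card (isolated_points_of Z - {w})"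
        using iso_homsp(2)[OF hw] xi iso_card[OF t1Z] by simp
      also have "\<dots> \<le> card (isolated_points_of Z)"
        using finZ by (simp add: card_mono)
      finally show ?thesis using cardZ pos by simp
    next
      case False
      then have "topspace X \<subseteq> isolated_points_of X" unfolding isolated_points_of_def by auto
      then have "finite (topspace X)" using assms(3) finite_subset by blast
      then have "finite (topspace Z - {z})" using h1 by (metis finite_Diff finite_imageI)
      then have fz: "finite (topspace Z)" by simp
      have "Z = discrete_topology (topspace Z)"
        using finite_t1_space_imp_discrete_topology[OF refl fz t1Z] .
      then have "openin Z {z}" using zZ by (metis openin_discrete_topology empty_subsetI insert_subset)
      then show ?thesis using \<open>\<not> openin Z {z}\<close> by blast
    qed
  qed
qed

end
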